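(* Let $R$ be a commutative ring which is free as an abelian group, with $\mathbb{Z}$-basis $V=\{v_k\}_{k\in I}$ (the rank may be infinite), let $n\ge 2$ and let $p$ be a prime. For $r\ge 1$ let $\Gamma_r=\Gamma(SL_n(R),p^r)=\ker\big(SL_n(R)\to SL_n(R\otimes_{\mathbb{Z}}\mathbb{Z}/p^r)\big)$. Let $\mathfrak{g}=\mathfrak{sl}_n(\mathbb{F}_p[V])$ and let $\mathfrak{L}$ be the kernel of the evaluation map $\mathfrak{g}\otimes_{\mathbb{F}_p}\mathbb{F}_p[t]\xrightarrow{t=0}\mathfrak{g}$, i.e. $\mathfrak{L}=\mathfrak{g}\otimes_{\mathbb{F}_p} t\mathbb{F}_p[t]$. Then $\mathfrak{L}\cong \mathrm{gr}_*(\Gamma(SL_n(R),p))$ as Lie algebras over $\mathbb{F}_p$.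
   Context: $\mathbb{F}_p[V]$ denotes $R\otimes_{\mathbb{Z}}\mathbb{Z}/p=R/pR$, a commutative $\mathbb{F}_p$-algebra whose underlying vector space is free on (the image of) $V$. $\mathfrak{sl}_n(\mathbb{F}_p[V])$ is the Lie algebra of traceless $n\times n$ matrices over $R/pR$ with bracket $[A,B]=AB-BA$. $\mathfrak{g}\otimes_{\mathbb{F}_p}\mathbb{F}_p[t]$ has bracket $[A\otimes t^i,B\otimes t^j]=(AB-BA)\otimes t^{i+j}$. The filtration $\cdots\subseteq\Gamma_{r+1}\subseteq\Gamma_r\subseteq\cdots\subseteq\Gamma_1$ satisfies $[\Gamma_r,\Gamma_s]\subseteq\Gamma_{r+s}$ (group commutator $[g,h]=g^{-1}h^{-1}gh$), and each $\Gamma_r/\Gamma_{r+1}$ is an elementary abelian $p$-group, regarded as an $\mathbb{F}_p$-vector space. $\mathrm{gr}_*(\Gamma(SL_n(R),p))=\bigoplus_{r\ge1}\Gamma_r/\Gamma_{r+1}$, with Lie bracket obtained by extending bilinearly the maps $\Gamma_r/\Gamma_{r+1}\times\Gamma_s/\Gamma_{s+1}\to\Gamma_{r+s}/\Gamma_{r+s+1}$ induced by the group commutator. *)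

theory Defs
  imports "HOL-Analysis.Analysis" "HOL-Algebra.Algebra"
begin

definition int_scale :: "int \<Rightarrow> 'a::comm_ring_1 \<Rightarrow> 'a" where
  "int_scale k x = of_int k * x"

definition free_Z_basis :: "'a::comm_ring_1 set \<Rightarrow> bool" where
  "free_Z_basis V \<longleftrightarrow> \<not> module.dependent int_scale V \<and> module.span int_scale V = UNIV"

definition ring_of :: "'a::comm_ring_1 ring" where
  "ring_of = \<lparr>carrier = UNIV, monoid.mult = (*), one = 1, ring.zero = 0, ring.add = (+)\<rparr>"

definition mult_ideal :: "nat \<Rightarrow> 'a::comm_ring_1 set" where
  "mult_ideal m = {of_nat m * x | x. True}"

text \<open>F_p[V] = R/pR as a HOL-Algebra quotient ring.\<close>
definition Rmodp :: "nat \<Rightarrow> 'a::comm_ring_1 set ring" where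
  "Rmodp p = ring_of Quot mult_ideal p"

definition sl_add :: "('b, 'c) ring_scheme \<Rightarrow> ('n::finite \<Rightarrow> 'n \<Rightarrow> 'b) monoid" where
  "sl_add S = \<lparr>carrier = {M. (\<forall>i j. M i j \<in> carrier S) \<and> finsum S (\<lambda>i. M i i) UNIV = \<zero>\<^bsub>S\<^esub>},
               monoid.mult = (\<lambda>A B. \<lambda>i j. A i j \<oplus>\<^bsub>S\<^esub> B i j),
               one = (\<lambda>i j. \<zero>\<^bsub>S\<^esub>)\<rparr>"

definition sl_bracket :: "('b, 'c) ring_scheme \<Rightarrow> ('n::finite \<Rightarrow> 'n \<Rightarrow> 'b) \<Rightarrow> ('n \<Rightarrow> 'n \<Rightarrow> 'b) \<Rightarrow> ('n \<Rightarrow> 'n \<Rightarrow> 'b)" where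
  "sl_bracket S A B = (\<lambda>i j. finsum S (\<lambda>l. A i l \<otimes>\<^bsub>S\<^esub> B l j) UNIV
                            \<ominus>\<^bsub>S\<^esub> finsum S (\<lambda>l. B i l \<otimes>\<^bsub>S\<^esub> A l j) UNIV)"

definition pos_degrees :: "nat set" where
  "pos_degrees = {r. 1 \<le> r}"

text \<open>L = g \<otimes> t F_p[t] = direct sum over i \<ge> 1 of copies g t^i, additive group.\<close>
definition loop_add :: "nat \<Rightarrow> (nat \<Rightarrow> 'n::finite \<Rightarrow> 'n \<Rightarrow> 'a::comm_ring_1 set) monoid" where
  "loop_add p = sum_group pos_degrees (\<lambda>_. sl_add (Rmodp p :: 'a set ring))"

text \<open>Bracket on L: [A t^i, B t^j] = [A,B] t^(i+j), extended bilinearly.\<close>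
definition loop_bracket :: "nat \<Rightarrow> (nat \<Rightarrow> 'n::finite \<Rightarrow> 'n \<Rightarrow> 'a::comm_ring_1 set)
      \<Rightarrow> (nat \<Rightarrow> 'n \<Rightarrow> 'n \<Rightarrow> 'a set) \<Rightarrow> (nat \<Rightarrow> 'n \<Rightarrow> 'n \<Rightarrow> 'a set)" where
  "loop_bracket p xa ya = (\<lambda>k\<in>pos_degrees.
      finprod (sl_add (Rmodp p :: 'a set ring))
        (\<lambda>(i, j). sl_bracket (Rmodp p :: 'a set ring) (xa i) (ya j))
        {(i, j). 1 \<le> i \<and> 1 \<le> j \<and> i + j = k})"

definition SL :: "('a::comm_ring_1 ^ 'n::finite ^ 'n) monoid" where
  "SL = \<lparr>carrier = {A. det A = 1}, monoid.mult = (**), one = mat 1\<rparr>"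

definition Gam :: "nat \<Rightarrow> nat \<Rightarrow> ('a::comm_ring_1 ^ 'n::finite ^ 'n) set" where
  "Gam p r = {A \<in> carrier SL. \<forall>i j. A $ i $ j - mat 1 $ i $ j \<in> mult_ideal (p ^ r)}"

definition gr_piece :: "nat \<Rightarrow> nat \<Rightarrow> ('a::comm_ring_1 ^ 'n::finite ^ 'n) set monoid" where
  "gr_piece p r = (SL\<lparr>carrier := Gam p r\<rparr>) Mod (Gam p (r + 1))"

definition grp_comm :: "('a::comm_ring_1 ^ 'n::finite ^ 'n) \<Rightarrow> ('a ^ 'n ^ 'n) \<Rightarrow> ('a ^ 'n ^ 'n)" where
  "grp_comm g h = inv\<^bsub>SL\<^esub> g \<otimes>\<^bsub>SL\<^esub> inv\<^bsub>SL\<^esub> h \<otimes>\<^bsub>SL\<^esub> g \<otimes>\<^bsub>SL\<^esub> h"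

definition coset_comm :: "nat \<Rightarrow> nat \<Rightarrow> nat \<Rightarrow> ('a::comm_ring_1 ^ 'n::finite ^ 'n) set
      \<Rightarrow> ('a ^ 'n ^ 'n) set \<Rightarrow> ('a ^ 'n ^ 'n) set" where
  "coset_comm p r s a b = Gam p (r + s + 1) #>\<^bsub>SL\<^esub> grp_comm (SOME g. g \<in> a) (SOME h. h \<in> b)"

definition gr_add :: "nat \<Rightarrow> (nat \<Rightarrow> ('a::comm_ring_1 ^ 'n::finite ^ 'n) set) monoid" where
  "gr_add p = sum_group pos_degrees (gr_piece p)"

definition gr_bracket :: "nat \<Rightarrow> (nat \<Rightarrow> ('a::comm_ring_1 ^ 'n::finite ^ 'n) set)
      \<Rightarrow> (nat \<Rightarrow> ('a ^ 'n ^ 'n) set) \<Rightarrow> (nat \<Rightarrow> ('a ^ 'n ^ 'n) set)" where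
  "gr_bracket p x y = (\<lambda>k\<in>pos_degrees.
      finprod (gr_piece p k) (\<lambda>(r, s). coset_comm p r s (x r) (y s))
        {(r, s). 1 \<le> r \<and> 1 \<le> s \<and> r + s = k})"

text \<open>Isomorphism of Lie algebras over F_p: an isomorphism of the underlying additive groups
  (F_p-linearity is automatic for additive maps between F_p-vector spaces) preserving brackets.\<close>
definition lie_iso :: "('x, 'c) monoid_scheme \<Rightarrow> ('x \<Rightarrow> 'x \<Rightarrow> 'x)
      \<Rightarrow> ('y, 'd) monoid_scheme \<Rightarrow> ('y \<Rightarrow> 'y \<Rightarrow> 'y) \<Rightarrow> ('x \<Rightarrow> 'y) \<Rightarrow> bool" where
  "lie_iso L brL M brM f \<longleftrightarrow> f \<in> iso L M \<and>
     (\<forall>x\<in>carrier L. \<forall>y\<in>carrier L. f (brL x y) = brM (f x) (f y))"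

end

theory Submission
  imports Defs
begin


lemma int_scale_module: "Modules.module int_scale"
  by unfold_locales (auto simp: int_scale_def algebra_simps)

lemma torsion_free:
  fixes V :: "'a::comm_ring_1 set"
  fixes x :: 'a
  assumes "free_Z_basis V" "m \<noteq> 0" "of_int m * x = 0"
  shows "x = 0"
proof -
  interpret M: Modules.module int_scale by (rule int_scale_module)
  have "x \<in> M.span V" using assms(1) by (simp add: free_Z_basis_def)
  then obtain t r where t: "finite t" "t \<subseteq> V" "x = (\<Sum>a\<in>t. int_scale (r a) a)"
    unfolding M.span_explicit by blast
  have "(\<Sum>a\<in>t. int_scale (m * r a) a) = of_int m * x"
    by (simp add: t(3) sum_distrib_left int_scale_def mult.assoc)
  hence "(\<Sum>a\<in>t. int_scale (m * r a) a) = 0" using assms by simp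
  hence "\<forall>v\<in>t. m * r v = 0" using assms(1) t M.independentD[of V t "\<lambda>v. m * r v"] by (auto simp: free_Z_basis_def)
  hence "\<forall>v\<in>t. r v = 0" using assms(2) by simp
  thus ?thesis using t(3) by (simp add: int_scale_def)
qed

lemma cring_ring_of: "cring (ring_of :: 'a::comm_ring_1 ring)"
  unfolding ring_of_def
  apply (rule cringI)
    apply (rule abelian_groupI)
  apply (auto simp: algebra_simps)
   apply (rule_tac x="-x" in exI, simp)
   apply (rule comm_monoidI)
  apply (auto simp: algebra_simps)
  done

lemma ring_of_simps [simp]:
  "carrier (ring_of :: 'a::comm_ring_1 ring) = UNIV"
  "(\<oplus>\<^bsub>(ring_of :: 'a ring)\<^esub>) = (+)"
  "(\<otimes>\<^bsub>(ring_of :: 'a ring)\<^esub>) = (*)"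
  "\<zero>\<^bsub>(ring_of :: 'a ring)\<^esub> = 0"
  "\<one>\<^bsub>(ring_of :: 'a ring)\<^esub> = 1"
  by (auto simp: ring_of_def)

lemma ring_of_ainv [simp]: "\<ominus>\<^bsub>(ring_of :: 'a::comm_ring_1 ring)\<^esub> x = - x"
proof -
  interpret cring "ring_of :: 'a ring" by (rule cring_ring_of)
  show ?thesis using sum_zero_eq_neg[of "-x" x] by simp
qed

lemma ring_of_aminus [simp]: "x \<ominus>\<^bsub>(ring_of :: 'a::comm_ring_1 ring)\<^esub> y = x - y"
  by (simp add: a_minus_def)

lemma ideal_mult_ideal: "ideal (mult_ideal m) (ring_of :: 'a::comm_ring_1 ring)"
proof -
  interpret cring "ring_of :: 'a ring" by (rule cring_ring_of)
  show ?thesis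
    apply (rule idealI)
       apply (rule ring_axioms)
      apply (rule add.subgroupI)
        apply (auto simp: mult_ideal_def)
       apply (metis mult_minus_right)
      apply (metis distrib_left)
     apply (metis mult.left_commute)
    apply (metis mult.assoc mult.commute)
    done
qed

definition pr :: "nat \<Rightarrow> 'a::comm_ring_1 \<Rightarrow> 'a set" where
  "pr m a = mult_ideal m +>\<^bsub>(ring_of :: 'a ring)\<^esub> a"

lemma Rmodp_cring: "cring (Rmodp m :: 'a::comm_ring_1 set ring)"
  unfolding Rmodp_def using ideal.quotient_is_cring[OF ideal_mult_ideal cring_ring_of] .

lemma pr_hom: "ring_hom_cring (ring_of :: 'a::comm_ring_1 ring) (Rmodp m) (pr m)"
  unfolding Rmodp_def pr_def[abs_def]
  using ideal.rcos_ring_hom_cring[OF ideal_mult_ideal cring_ring_of] .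

lemma pr_set: "pr m (a::'a::comm_ring_1) = {h + a | h. h \<in> mult_ideal m}"
  by (auto simp: pr_def a_r_coset_def')

lemma mult_ideal_add: "x \<in> mult_ideal m \<Longrightarrow> y \<in> mult_ideal m \<Longrightarrow> x + y \<in> mult_ideal m"
  by (auto simp: mult_ideal_def) (metis distrib_left)
lemma mult_ideal_diff: "x \<in> mult_ideal m \<Longrightarrow> y \<in> mult_ideal m \<Longrightarrow> x - y \<in> mult_ideal m"
  by (auto simp: mult_ideal_def) (metis right_diff_distrib)
lemma mult_ideal_uminus: "x \<in> mult_ideal m \<Longrightarrow> - x \<in> mult_ideal m"
  by (auto simp: mult_ideal_def) (metis mult_minus_right)
lemma mult_ideal_0 [simp]: "0 \<in> mult_ideal m"
  by (auto simp: mult_ideal_def) (metis mult_zero_right)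
lemma mult_ideal_mult: "x \<in> mult_ideal m \<Longrightarrow> y * x \<in> mult_ideal m"
  by (auto simp: mult_ideal_def) (metis mult.left_commute)
lemma mult_ideal_mult2: "x \<in> mult_ideal m \<Longrightarrow> x * y \<in> mult_ideal m"
  by (metis mult_ideal_mult mult.commute)
lemma mult_ideal_I: "of_nat m * x \<in> mult_ideal m"
  by (auto simp: mult_ideal_def)
lemma mult_ideal_sum: "(\<And>i. i \<in> S \<Longrightarrow> f i \<in> mult_ideal m) \<Longrightarrow> sum f S \<in> mult_ideal m"
  by (induct S rule: infinite_finite_induct) (auto intro: mult_ideal_add)

lemma pr_eq: "pr m a = pr m b \<longleftrightarrow> a - b \<in> mult_ideal m"
proof
  assume "pr m a = pr m b"
  hence "a \<in> pr m b" unfolding pr_set by auto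
  then obtain h where "h \<in> mult_ideal m" "a = h + b" unfolding pr_set by auto
  thus "a - b \<in> mult_ideal m" by simp
next
  assume d: "a - b \<in> mult_ideal m"
  show "pr m a = pr m b" unfolding pr_set
    apply auto
    subgoal for h by (rule exI[of _ "h + (a - b)"]) (auto intro: mult_ideal_add[OF _ d])
    subgoal for h by (rule exI[of _ "h - (a - b)"]) (auto intro: mult_ideal_diff[OF _ d])
    done
qed

lemma Rmodp_carrier: "carrier (Rmodp m :: 'a::comm_ring_1 set ring) = range (pr m)"
  by (auto simp: Rmodp_def FactRing_def A_RCOSETS_def' pr_def)

lemma Rmodp_zero: "\<zero>\<^bsub>(Rmodp m :: 'a::comm_ring_1 set ring)\<^esub> = pr m 0"
proof -
  interpret h: ring_hom_cring "ring_of :: 'a ring" "Rmodp m" "pr m" by (rule pr_hom)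
  show ?thesis using h.hom_zero by simp
qed

lemma pr_zero_iff: "pr m a = \<zero>\<^bsub>(Rmodp m :: 'a::comm_ring_1 set ring)\<^esub> \<longleftrightarrow> a \<in> mult_ideal m"
  by (simp add: Rmodp_zero pr_eq)

lemma pr_ops:
  "pr m a \<oplus>\<^bsub>(Rmodp m :: 'a::comm_ring_1 set ring)\<^esub> pr m b = pr m (a + b)"
  "pr m a \<otimes>\<^bsub>(Rmodp m :: 'a::comm_ring_1 set ring)\<^esub> pr m b = pr m (a * b)"
  "\<ominus>\<^bsub>(Rmodp m :: 'a::comm_ring_1 set ring)\<^esub> pr m a = pr m (- a)"
  "pr m a \<ominus>\<^bsub>(Rmodp m :: 'a::comm_ring_1 set ring)\<^esub> pr m b = pr m (a - b)"
  "finsum (Rmodp m :: 'a::comm_ring_1 set ring) (\<lambda>i. pr m (f i)) A = pr m (sum f A)"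
proof -
  interpret h: ring_hom_cring "ring_of :: 'a ring" "Rmodp m" "pr m" by (rule pr_hom)
  show "pr m a \<oplus>\<^bsub>(Rmodp m :: 'a::comm_ring_1 set ring)\<^esub> pr m b = pr m (a + b)"
    using h.hom_add[of a b] by simp
  show "pr m a \<otimes>\<^bsub>(Rmodp m :: 'a::comm_ring_1 set ring)\<^esub> pr m b = pr m (a * b)"
    using h.hom_mult[of a b] by simp
  show "\<ominus>\<^bsub>(Rmodp m :: 'a::comm_ring_1 set ring)\<^esub> pr m a = pr m (- a)"
    using h.hom_a_inv[of a] by simp
  thus "pr m a \<ominus>\<^bsub>(Rmodp m :: 'a::comm_ring_1 set ring)\<^esub> pr m b = pr m (a - b)"
    using h.hom_add[of a "-b"] h.hom_a_inv[of b] by (simp add: a_minus_def)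
  have "finsum ring_of f A = sum f A"
    by (induct A rule: infinite_finite_induct) (auto simp: h.R.finsum_insert)
  thus "finsum (Rmodp m :: 'a::comm_ring_1 set ring) (\<lambda>i. pr m (f i)) A = pr m (sum f A)"
    using h.hom_finsum[of f A] by (simp add: comp_def)
qed


lemma sl_add_simps:
  "carrier (sl_add S) = {M. (\<forall>i j. M i j \<in> carrier S) \<and> finsum S (\<lambda>i. M i i) UNIV = \<zero>\<^bsub>S\<^esub>}"
  "(\<otimes>\<^bsub>sl_add S\<^esub>) = (\<lambda>A B. \<lambda>i j. A i j \<oplus>\<^bsub>S\<^esub> B i j)"
  "\<one>\<^bsub>sl_add S\<^esub> = (\<lambda>i j. \<zero>\<^bsub>S\<^esub>)"
  by (auto simp: sl_add_def)

lemma (in cring) sl_add_comm_group: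
  shows "comm_group (sl_add R :: ('n::finite \<Rightarrow> 'n \<Rightarrow> 'a) monoid)"
  proof (rule comm_groupI)
    fix x y assume x: "x \<in> carrier (sl_add R :: ('n \<Rightarrow> 'n \<Rightarrow> 'a) monoid)"
      and y: "y \<in> carrier (sl_add R :: ('n \<Rightarrow> 'n \<Rightarrow> 'a) monoid)"
    have "finsum R (\<lambda>i. x i i \<oplus> y i i) UNIV = finsum R (\<lambda>i. x i i) UNIV \<oplus> finsum R (\<lambda>i. y i i) UNIV"
      using x y by (intro finsum_addf) (auto simp: sl_add_simps)
    thus "x \<otimes>\<^bsub>sl_add R\<^esub> y \<in> carrier (sl_add R)" using x y by (auto simp: sl_add_simps)
    show "x \<otimes>\<^bsub>sl_add R\<^esub> y = y \<otimes>\<^bsub>sl_add R\<^esub> x"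
      using x y by (auto simp: sl_add_simps a_comm fun_eq_iff)
  next
    show "\<one>\<^bsub>sl_add R\<^esub> \<in> carrier (sl_add R :: ('n \<Rightarrow> 'n \<Rightarrow> 'a) monoid)"
      by (auto simp: sl_add_simps finsum_zero)
  next
    fix x y z assume "x \<in> carrier (sl_add R :: ('n \<Rightarrow> 'n \<Rightarrow> 'a) monoid)"
      "y \<in> carrier (sl_add R :: ('n \<Rightarrow> 'n \<Rightarrow> 'a) monoid)"
      "z \<in> carrier (sl_add R :: ('n \<Rightarrow> 'n \<Rightarrow> 'a) monoid)"
    thus "x \<otimes>\<^bsub>sl_add R\<^esub> y \<otimes>\<^bsub>sl_add R\<^esub> z = x \<otimes>\<^bsub>sl_add R\<^esub> (y \<otimes>\<^bsub>sl_add R\<^esub> z)"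
      by (auto simp: sl_add_simps a_assoc fun_eq_iff)
  next
    fix x assume x: "x \<in> carrier (sl_add R :: ('n \<Rightarrow> 'n \<Rightarrow> 'a) monoid)"
    thus "\<one>\<^bsub>sl_add R\<^esub> \<otimes>\<^bsub>sl_add R\<^esub> x = x"
      by (auto simp: sl_add_simps fun_eq_iff)
    have c: "\<And>i j. x i j \<in> carrier R" and t: "finsum R (\<lambda>i. x i i) UNIV = \<zero>"
      using x by (auto simp: sl_add_simps)
    have "finsum R (\<lambda>i. \<ominus> x i i) UNIV \<oplus> finsum R (\<lambda>i. x i i) UNIV = finsum R (\<lambda>i. \<ominus> x i i \<oplus> x i i) UNIV"
      using c by (intro finsum_addf[symmetric]) auto
    also have "\<dots> = \<zero>" using c by (simp add: l_neg finsum_zero)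
    finally have "finsum R (\<lambda>i. \<ominus> x i i) UNIV = \<zero>" using t c by simp
    thus "\<exists>y\<in>carrier (sl_add R). y \<otimes>\<^bsub>sl_add R\<^esub> x = \<one>\<^bsub>sl_add R\<^esub>"
      using c by (intro bexI[of _ "\<lambda>i j. \<ominus> x i j"]) (auto simp: sl_add_simps l_neg fun_eq_iff)
  qed



definition sm :: "'a::comm_ring_1 \<Rightarrow> 'a^'n::finite^'n \<Rightarrow> 'a^'n^'n" where
  "sm a K = (\<chi> i j. a * K$i$j)"

lemma sm_comp [simp]: "sm a K $ i $ j = a * K$i$j"
  by (simp add: sm_def)

lemma mmult_comp: "(A ** B) $ i $ j = (\<Sum>k\<in>UNIV. A$i$k * B$k$j)"
  by (simp add: matrix_matrix_mult_def)

lemma mat1_comp: "(mat 1 :: 'a::comm_ring_1^'n::finite^'n) $ i $ j = (if i = j then 1 else 0)"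
  by (simp add: mat_def)

lemma sm_mult_left: "sm a A ** B = sm a (A ** B)"
  by (simp add: vec_eq_iff mmult_comp sum_distrib_left mult.assoc)
lemma sm_mult_right: "A ** sm a B = sm a (A ** B)"
  by (simp add: vec_eq_iff mmult_comp sum_distrib_left mult.left_commute)
lemma sm_sm: "sm a (sm b A) = sm (a * b) A"
  by (simp add: vec_eq_iff mult.assoc)
lemma sm_add: "sm a (A + B) = sm a A + sm a B"
  by (simp add: vec_eq_iff distrib_left)
lemma sm_diff: "sm a (A - B) = sm a A - sm a B"
  by (simp add: vec_eq_iff right_diff_distrib)
lemma sm_uminus: "sm a (- A) = - sm a A"
  by (simp add: vec_eq_iff)
lemma sm_0 [simp]: "sm a 0 = 0"
  by (simp add: vec_eq_iff)

definition adj :: "'a::comm_ring_1^'n::finite^'n \<Rightarrow> 'a^'n^'n" where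
  "adj A = (\<chi> k j. det (\<chi> r. if r = j then (\<chi> l. if l = k then 1 else 0) else A$r))"

lemma adj_right: "A ** adj A = mat (det A)"
proof -
  have "(A ** adj A) $ i $ j = (if i = j then det A else 0)" for i j
  proof -
    have "(A ** adj A) $ i $ j = (\<Sum>k\<in>UNIV. A$i$k * det (\<chi> r. if r = j then (\<chi> l. if l = k then 1 else 0) else A$r))"
      by (simp add: mmult_comp adj_def)
    also have "\<dots> = (\<Sum>k\<in>UNIV. det (\<chi> r. if r = j then A$i$k *s (\<chi> l. if l = k then 1 else 0) else A$r))"
      by (simp add: det_row_mul)
    also have "\<dots> = det (\<chi> r. if r = j then (\<Sum>k\<in>UNIV. A$i$k *s (\<chi> l. if l = k then 1 else 0)) else A$r)"
      by (rule det_linear_row_sum[symmetric]) simp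
    also have "(\<Sum>k\<in>UNIV. A$i$k *s (\<chi> l. if l = k then 1 else 0)) = A$i"
      by (simp add: vec_eq_iff sum_component if_distrib cong: if_cong)
    also have "det (\<chi> r. if r = j then A$i else A$r) = (if i = j then det A else 0)"
    proof (cases "i = j")
      case True
      have "(\<chi> r. if r = j then A$i else A$r) = A" using True by (simp add: vec_eq_iff)
      thus ?thesis using True by simp
    next
      case False
      show ?thesis using False
        by (simp, intro det_identical_rows[of i j]) (auto simp: row_def vec_eq_iff)
    qed
    finally show ?thesis .
  qed
  thus ?thesis by (simp add: vec_eq_iff mat_def)
qed

lemma det_one_inverse:
  fixes A :: "'a::comm_ring_1^'n::finite^'n"
  assumes "det A = 1"
  shows "A ** adj A = mat 1" "adj A ** A = mat 1" "det (adj A) = 1"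
proof -
  show r: "A ** adj A = mat 1" using adj_right[of A] assms by simp
  have "transpose A ** adj (transpose A) = mat 1" using adj_right[of "transpose A"] assms by simp
  hence l: "transpose (adj (transpose A)) ** A = mat 1"
    by (metis matrix_transpose_mul transpose_mat transpose_transpose)
  have "transpose (adj (transpose A)) = transpose (adj (transpose A)) ** (A ** adj A)"
    using r by simp
  also have "\<dots> = adj A" by (simp add: matrix_mul_assoc l)
  finally show "adj A ** A = mat 1" using l by simp
  have "det A * det (adj A) = 1" using r det_mul[of A "adj A"] by simp
  thus "det (adj A) = 1" using assms by simp
qed

lemma SL_simps [simp]:
  "carrier SL = {A. det A = 1}" "(\<otimes>\<^bsub>SL\<^esub>) = (**)" "\<one>\<^bsub>SL\<^esub> = mat 1"
  by (auto simp: SL_def)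

lemma SL_group: "group (SL :: ('a::comm_ring_1^'n::finite^'n) monoid)"
proof (rule groupI)
  fix x assume "x \<in> carrier (SL :: ('a^'n^'n) monoid)"
  thus "\<exists>y\<in>carrier SL. y \<otimes>\<^bsub>SL\<^esub> x = \<one>\<^bsub>SL\<^esub>"
    using det_one_inverse[of x] by (intro bexI[of _ "adj x"]) auto
qed (auto simp: det_mul matrix_mul_assoc)

lemma SL_inv: "det A = 1 \<Longrightarrow> inv\<^bsub>SL\<^esub> A = adj A"
  using group.inv_equality[OF SL_group, of "adj A" A] det_one_inverse[of A] by simp



lemma prod_one_plus:
  fixes c :: "'a::comm_ring_1"
  assumes "finite S"
  shows "\<exists>k. (\<Prod>i\<in>S. 1 + c * f i) = 1 + c * sum f S + c^2 * k"
  using assms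
proof (induct S rule: finite_induct)
  case empty thus ?case by (intro exI[of _ 0]) simp
next
  case (insert a S)
  then obtain k where k: "(\<Prod>i\<in>S. 1 + c * f i) = 1 + c * sum f S + c^2 * k" by blast
  have "(\<Prod>i\<in>insert a S. 1 + c * f i) = (1 + c * f a) * (1 + c * sum f S + c^2 * k)"
    using insert k by simp
  also have "\<dots> = 1 + c * sum f (insert a S) + c^2 * (k + f a * sum f S + c * f a * k)"
    using insert by (simp add: algebra_simps power2_eq_square)
  finally show ?case by blast
qed

lemma det_I_plus:
  fixes Y :: "'a::comm_ring_1^'n::finite^'n"
  shows "\<exists>k. det (mat 1 + sm c Y) = 1 + c * (\<Sum>i\<in>UNIV. Y$i$i) + c^2 * k"
proof -
  let ?M = "mat 1 + sm c Y"
  let ?P = "{p. p permutes (UNIV :: 'n set)}"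
  let ?t = "\<lambda>p. of_int (sign p) * (\<Prod>i\<in>UNIV. ?M$i$p i)"
  have Mc: "?M$i$j = (if i = j then 1 else 0) + c * Y$i$j" for i j
    by (simp add: mat1_comp)
  have nonid: "c^2 dvd ?t p" if p: "p \<in> ?P - {id}" for p
  proof -
    have pp: "p permutes UNIV" using p by simp
    from p obtain i where i: "p i \<noteq> i" by (auto simp: fun_eq_iff)
    define j where "j = p i"
    have ij: "i \<noteq> j" using i j_def by simp
    have pj: "p j \<noteq> j" using i j_def permutes_inj[OF pp] by (metis injD)
    have "(\<Prod>k\<in>UNIV. ?M$k$p k) = ?M$i$p i * (\<Prod>k\<in>UNIV - {i}. ?M$k$p k)"
      by (rule prod.remove) auto
    also have "(\<Prod>k\<in>UNIV - {i}. ?M$k$p k) = ?M$j$p j * (\<Prod>k\<in>UNIV - {i} - {j}. ?M$k$p k)"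
      using ij by (intro prod.remove) auto
    finally have e: "(\<Prod>k\<in>UNIV. ?M$k$p k) = ?M$i$p i * (?M$j$p j * (\<Prod>k\<in>UNIV - {i} - {j}. ?M$k$p k))" .
    have gi: "?M$i$p i = c * Y$i$p i" using i by (simp add: mat1_comp)
    have gj: "?M$j$p j = c * Y$j$p j" using pj by (simp add: mat1_comp)
    have "(\<Prod>k\<in>UNIV. ?M$k$p k) = c^2 * (Y$i$p i * Y$j$p j * (\<Prod>k\<in>UNIV - {i} - {j}. ?M$k$p k))"
      unfolding e gi gj by (simp only: power2_eq_square mult.assoc mult.left_commute)
    hence "c^2 dvd (\<Prod>k\<in>UNIV. ?M$k$p k)" by (simp only: dvd_triv_left)
    thus ?thesis by (rule dvd_mult)
  qed
  have "det ?M = sum ?t ?P" by (simp add: det_def)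
  also have "\<dots> = ?t id + sum ?t (?P - {id})"
    by (rule sum.remove) (auto simp: permutes_id finite_permutations)
  finally have d: "det ?M = ?t id + sum ?t (?P - {id})" .
  have "c^2 dvd sum ?t (?P - {id})" by (rule dvd_sum) (rule nonid)
  then obtain k1 where k1: "sum ?t (?P - {id}) = c^2 * k1" by (elim dvdE)
  obtain k2 where k2: "(\<Prod>i\<in>UNIV. 1 + c * Y$i$i) = 1 + c * (\<Sum>i\<in>UNIV. Y$i$i) + c^2 * k2"
    using prod_one_plus[of UNIV c "\<lambda>i. Y$i$i"] by auto
  have "?t id = (\<Prod>i\<in>UNIV. 1 + c * Y$i$i)" by (simp add: sign_id mat1_comp)
  hence "det ?M = 1 + c * (\<Sum>i\<in>UNIV. Y$i$i) + c^2 * (k2 + k1)"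
    using d k1 k2 by (simp add: algebra_simps)
  thus ?thesis by blast
qed



lemma det_rowop:
  fixes A :: "'a::comm_ring_1^'n::finite^'n"
  assumes "i \<noteq> j"
  shows "det (\<chi> k l. if k = i then A$i$l + cc * (A$j$l) else A$k$l) = det A"
proof -
  have "(\<chi> k l. if k = i then A$i$l + cc * (A$j$l) else A$k$l) = (\<chi> k. if k = i then row i A + vector_scalar_mult cc (row j A) else row k A)"
    by (simp add: vec_eq_iff row_def)
  thus ?thesis using det_row_operation[OF assms, where c=cc and A=A] by simp
qed

lemma matrix_add_rdistrib: "((B + C) ** (A::'a::comm_ring_1^'n::finite^'n)) = (B ** A) + (C ** A)"
  by (simp add: vec_eq_iff mmult_comp sum.distrib distrib_right)
lemma matrix_diff_rdistrib: "((B - C) ** (A::'a::comm_ring_1^'n::finite^'n)) = (B ** A) - (C ** A)"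
  by (simp add: vec_eq_iff mmult_comp sum_subtractf left_diff_distrib)
lemma matrix_diff_ldistrib: "((A::'a::comm_ring_1^'n::finite^'n) ** (B - C)) = (A ** B) - (A ** C)"
  by (simp add: vec_eq_iff mmult_comp sum_subtractf right_diff_distrib)
lemma matrix_uminus_left: "(- B) ** (A::'a::comm_ring_1^'n::finite^'n) = - (B ** A)"
  by (simp add: vec_eq_iff mmult_comp sum_negf)
lemma matrix_uminus_right: "(A::'a::comm_ring_1^'n::finite^'n) ** (- B) = - (A ** B)"
  by (simp add: vec_eq_iff mmult_comp sum_negf)

locale gm =
  fixes p :: nat and V :: "'a::comm_ring_1 set"
  assumes fb: "free_Z_basis V" and pp: "Factorial_Ring.prime p"
begin

lemma p_pos: "p \<noteq> 0" using pp by auto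

lemma tf: "m \<noteq> 0 \<Longrightarrow> of_nat m * (x::'a) = 0 \<Longrightarrow> x = 0"
  using torsion_free[OF fb, of "int m" x] by simp

lemma cancel: "m \<noteq> 0 \<Longrightarrow> of_nat m * (x::'a) = of_nat m * y \<Longrightarrow> x = y"
  using tf[of m "x - y"] by (simp add: right_diff_distrib)

lemma cancelp: "(of_nat p ^ r) * (x::'a) = (of_nat p ^ r) * y \<Longrightarrow> x = y"
  using cancel[of "p^r" x y] p_pos by simp

lemma sm_cancel: "sm (of_nat p ^ r) (A::'a^'n::finite^'n) = sm (of_nat p ^ r) B \<Longrightarrow> A = B"
  by (auto simp: vec_eq_iff intro: cancelp)

lemma Gam_iff: "A \<in> (Gam p r :: ('a^'n::finite^'n) set) \<longleftrightarrow> det A = 1 \<and> (\<exists>Y. A = mat 1 + sm (of_nat p ^ r) Y)"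
proof
  assume A: "A \<in> Gam p r"
  hence "\<forall>i j. \<exists>y. A$i$j - mat 1$i$j = of_nat p ^ r * y"
    by (auto simp: Gam_def mult_ideal_def)
  then obtain f where f: "\<And>i j. A$i$j - mat 1$i$j = of_nat p ^ r * f i j" by metis
  have "A = mat 1 + sm (of_nat p ^ r) (\<chi> i j. f i j)"
    using f by (simp add: vec_eq_iff algebra_simps) 
  thus "det A = 1 \<and> (\<exists>Y. A = mat 1 + sm (of_nat p ^ r) Y)" using A by (auto simp: Gam_def)
next
  assume "det A = 1 \<and> (\<exists>Y. A = mat 1 + sm (of_nat p ^ r) Y)"
  thus "A \<in> Gam p r" by (auto simp: Gam_def mult_ideal_def)
qed

definition Xr :: "nat \<Rightarrow> 'a^'n::finite^'n \<Rightarrow> 'a^'n^'n" where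
  "Xr r A = (SOME Y. A = mat 1 + sm (of_nat p ^ r) Y)"

lemma Xr: "A \<in> Gam p r \<Longrightarrow> A = mat 1 + sm (of_nat p ^ r) (Xr r A)"
  unfolding Xr_def by (rule someI_ex) (simp add: Gam_iff)

lemma Xr_unique: "A = mat 1 + sm (of_nat p ^ r) Y \<Longrightarrow> Xr r A = Y"
proof -
  assume A: "A = mat 1 + sm (of_nat p ^ r) Y"
  hence "A = mat 1 + sm (of_nat p ^ r) (Xr r A)" unfolding Xr_def by (rule someI)
  with A show ?thesis using sm_cancel by (metis add_left_cancel)
qed

lemma Gam_mult:
  "(mat 1 + sm (of_nat p ^ r) Y) ** (mat 1 + sm (of_nat p ^ r) Z) = mat 1 + sm (of_nat p ^ r) (Y + Z + sm (of_nat p ^ r) (Y ** Z))"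
  by (simp add: matrix_add_ldistrib matrix_add_rdistrib sm_mult_left sm_mult_right sm_sm sm_add)

end


context gm begin

lemma Gam_subgroup: "subgroup (Gam p r) (SL :: ('a^'n::finite^'n) monoid)"
proof (rule group.subgroupI[OF SL_group])
  show "Gam p r \<subseteq> carrier (SL :: ('a^'n::finite^'n) monoid)" by (auto simp: Gam_def)
  show "Gam p r \<noteq> ({} :: ('a^'n::finite^'n) set)"
    using Gam_iff[of "mat 1" r] by (metis det_I add_0_right sm_0 empty_iff)
next
  fix A :: "'a^'n^'n" assume A: "A \<in> Gam p r"
  then obtain Y where Y: "A = mat 1 + sm (of_nat p ^ r) Y" and d: "det A = 1" by (auto simp: Gam_iff)
  have "adj A ** A = mat 1" using det_one_inverse[OF d] by simp
  moreover have "adj A ** A = adj A + sm (of_nat p ^ r) (adj A ** Y)"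
    by (simp add: Y matrix_add_ldistrib sm_mult_right)
  ultimately have "adj A = mat 1 + sm (of_nat p ^ r) (- (adj A ** Y))"
    by (simp add: sm_uminus algebra_simps)
  thus "inv\<^bsub>SL\<^esub> A \<in> Gam p r" using SL_inv[OF d] det_one_inverse[OF d] by (auto simp: Gam_iff)
next
  fix A B :: "'a^'n^'n" assume "A \<in> Gam p r" "B \<in> Gam p r"
  then obtain Y Z where "A = mat 1 + sm (of_nat p ^ r) Y" "det A = 1" "B = mat 1 + sm (of_nat p ^ r) Z" "det B = 1"
    by (auto simp: Gam_iff)
  thus "A \<otimes>\<^bsub>SL\<^esub> B \<in> Gam p r" using Gam_mult by (auto simp: Gam_iff det_mul)
qed

abbreviation G :: "nat \<Rightarrow> ('a^'n::finite^'n) monoid" where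
  "G r \<equiv> SL\<lparr>carrier := Gam p r\<rparr>"

lemma G_group: "group (G r :: ('a^'n::finite^'n) monoid)"
  using subgroup.subgroup_is_group[OF Gam_subgroup SL_group] .

abbreviation Q :: "'a set ring" where "Q \<equiv> Rmodp p"

abbreviation sl :: "('n::finite \<Rightarrow> 'n \<Rightarrow> 'a set) monoid" where
  "sl \<equiv> sl_add Q"

lemma sl_comm_group: "comm_group (sl :: ('n::finite \<Rightarrow> 'n \<Rightarrow> 'a set) monoid)"
  using cring.sl_add_comm_group[OF Rmodp_cring] .

definition psi :: "nat \<Rightarrow> 'a^'n::finite^'n \<Rightarrow> 'n \<Rightarrow> 'n \<Rightarrow> 'a set" where
  "psi r A = (\<lambda>i j. pr p (Xr r A $ i $ j))"

lemma in_P: "1 \<le> r \<Longrightarrow> of_nat p ^ r * w \<in> mult_ideal p"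
proof -
  assume "1 \<le> r"
  hence "of_nat p ^ r * w = of_nat p * (of_nat p ^ (r - 1) * w)"
    by (metis (no_types, lifting) mult.assoc power_eq_if not_one_le_zero)
  thus ?thesis by (simp add: mult_ideal_I)
qed

lemma psi_mult:
  assumes r: "1 \<le> r" and A: "A \<in> Gam p r" and B: "B \<in> Gam p r"
  shows "psi r (A ** B) = psi r A \<otimes>\<^bsub>sl\<^esub> psi r B"
proof -
  have "A ** B = mat 1 + sm (of_nat p ^ r) (Xr r A + Xr r B + sm (of_nat p ^ r) (Xr r A ** Xr r B))"
    using Xr[OF A] Xr[OF B] Gam_mult by metis
  hence e: "Xr r (A ** B) = Xr r A + Xr r B + sm (of_nat p ^ r) (Xr r A ** Xr r B)" by (rule Xr_unique)
  show ?thesis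
    by (auto simp: psi_def sl_add_simps fun_eq_iff pr_ops e pr_eq in_P[OF r])
qed

lemma trace_in_P:
  assumes r: "1 \<le> r" and A: "A \<in> Gam p r"
  shows "(\<Sum>i\<in>UNIV. Xr r A $ i $ i) \<in> mult_ideal p"
proof -
  obtain k where k: "det A = 1 + of_nat p ^ r * (\<Sum>i\<in>UNIV. Xr r A $ i $ i) + (of_nat p ^ r)^2 * k"
    using det_I_plus[of "of_nat p ^ r" "Xr r A"] Xr[OF A] by metis
  have "det A = 1" using A by (simp add: Gam_iff)
  hence "of_nat p ^ r * (\<Sum>i\<in>UNIV. Xr r A $ i $ i) = of_nat p ^ r * (- (of_nat p ^ r * k))"
    using k by (simp add: power2_eq_square algebra_simps) (metis add_eq_0_iff mult.assoc)
  hence "(\<Sum>i\<in>UNIV. Xr r A $ i $ i) = - (of_nat p ^ r * k)" by (rule cancelp)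
  thus ?thesis using in_P[OF r] mult_ideal_uminus by metis
qed

lemma psi_carrier:
  assumes r: "1 \<le> r" and A: "A \<in> Gam p r"
  shows "psi r A \<in> carrier sl"
  using trace_in_P[OF r A]
  by (auto simp: psi_def sl_add_simps Rmodp_carrier pr_ops pr_zero_iff)

lemma psi_hom: "1 \<le> r \<Longrightarrow> group_hom (G r) (sl :: ('n::finite \<Rightarrow> 'n \<Rightarrow> 'a set) monoid) (psi r)"
  apply (rule group_hom.intro[OF G_group comm_group.axioms(2)[OF sl_comm_group]])
  apply (auto simp: group_hom_axioms_def hom_def psi_carrier psi_mult)
  done

lemma Gam_succ:
  "A \<in> Gam p (Suc r) \<longleftrightarrow> A \<in> Gam p r \<and> (\<forall>i j. Xr r A $ i $ j \<in> mult_ideal p)"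
proof
  assume A: "A \<in> Gam p (Suc r)"
  then obtain W where W: "A = mat 1 + sm (of_nat p ^ Suc r) W" "det A = 1" by (auto simp: Gam_iff)
  hence W': "A = mat 1 + sm (of_nat p ^ r) (sm (of_nat p) W)" by (simp add: sm_sm mult.commute)
  hence "Xr r A = sm (of_nat p) W" by (rule Xr_unique)
  moreover have "A \<in> Gam p r" unfolding Gam_iff using W' W(2) by blast
  ultimately show "A \<in> Gam p r \<and> (\<forall>i j. Xr r A $ i $ j \<in> mult_ideal p)"
    by (auto simp: mult_ideal_I)
next
  assume A: "A \<in> Gam p r \<and> (\<forall>i j. Xr r A $ i $ j \<in> mult_ideal p)"
  hence "\<forall>i j. \<exists>z. Xr r A $ i $ j = of_nat p * z" by (auto simp: mult_ideal_def)
  then obtain f where f: "\<And>i j. Xr r A $ i $ j = of_nat p * f i j" by metis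
  have "Xr r A = sm (of_nat p) (\<chi> i j. f i j)" using f by (simp add: vec_eq_iff)
  hence "A = mat 1 + sm (of_nat p ^ Suc r) (\<chi> i j. f i j)"
    using Xr[of A r] A by (simp add: sm_sm mult.commute)
  thus "A \<in> Gam p (Suc r)" using A by (auto simp: Gam_iff)
qed

lemma psi_kernel:
  assumes r: "1 \<le> r"
  shows "kernel (G r) (sl :: ('n::finite \<Rightarrow> 'n \<Rightarrow> 'a set) monoid) (psi r) = Gam p (r + 1)"
  using Gam_succ[of _ r]
  by (auto simp: kernel_def psi_def sl_add_simps fun_eq_iff pr_zero_iff)

end


definition Em :: "'n::finite \<Rightarrow> 'n \<Rightarrow> 'a::comm_ring_1 \<Rightarrow> 'a^'n^'n" where
  "Em k l a = (\<chi> i j. if i = k \<and> j = l then a else 0)"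

definition Nm :: "'n::finite \<Rightarrow> 'n \<Rightarrow> 'a::comm_ring_1 \<Rightarrow> 'a^'n^'n" where
  "Nm k l a = (\<chi> i j. if i = k \<and> j = k then a else if i = k \<and> j = l then a
                    else if i = l \<and> j = k then - a else if i = l \<and> j = l then - a else 0)"

lemma det_Em:
  fixes k l :: "'n::finite" and a c :: "'a::comm_ring_1"
  assumes "k \<noteq> l"
  shows "det (mat 1 + sm c (Em k l a)) = 1"
proof -
  have "(mat 1 + sm c (Em k l a)) = (\<chi> s t. if s = k then (mat 1 :: 'a^'n^'n)$k$t + (c * a) * ((mat 1 :: 'a^'n^'n)$l$t) else (mat 1 :: 'a^'n^'n)$s$t)"
    using assms by (auto simp: vec_eq_iff Em_def mat1_comp)
  thus ?thesis using det_rowop[OF assms, of "mat 1" "c * a"] by simp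
qed

lemma det_Nm:
  fixes k l :: "'n::finite" and a c :: "'a::comm_ring_1"
  assumes kl: "k \<noteq> l"
  shows "det (mat 1 + sm c (Nm k l a)) = 1"
proof -
  let ?F = "mat 1 + sm c (Nm k l a)"
  let ?R1 = "(\<chi> s t. if s = k then ?F$k$t + 1 * ?F$l$t else ?F$s$t) :: 'a^'n^'n"
  let ?R2 = "(\<chi> s t. if s = l then ?R1$l$t + (c * a) * ?R1$k$t else ?R1$s$t) :: 'a^'n^'n"
  let ?R3 = "(\<chi> s t. if s = k then ?R2$k$t + (- 1) * ?R2$l$t else ?R2$s$t) :: 'a^'n^'n"
  have "det ?R1 = det ?F" by (rule det_rowop[OF kl])
  moreover have "det ?R2 = det ?R1" by (rule det_rowop) (use kl in auto)
  moreover have "det ?R3 = det ?R2" by (rule det_rowop[OF kl])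
  moreover have "?R3 = mat 1"
    using kl by (auto simp: vec_eq_iff Nm_def mat1_comp algebra_simps)
  ultimately show ?thesis by simp
qed

context gm begin

lemma Q_am: "abelian_monoid Q"
  using abelian_group.axioms(1)[OF ring.axioms(1)[OF cring.axioms(1)[OF Rmodp_cring]]] .

lemma finprod_in_subgroup:
  assumes H: "subgroup H (sl :: ('n::finite \<Rightarrow> 'n \<Rightarrow> 'a set) monoid)" and S: "finite S"
    and g: "\<And>s. s \<in> S \<Longrightarrow> g s \<in> H"
  shows "finprod sl g S \<in> H"
  using S g
proof (induct S rule: finite_induct)
  case empty show ?case using subgroup.one_closed[OF H] by (simp add: comm_monoid.finprod_empty comm_group.axioms(1)[OF sl_comm_group])
next
  case (insert x S)
  have "g \<in> S \<rightarrow> carrier sl" "g x \<in> carrier sl" using insert subgroup.subset[OF H] by auto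
  thus ?case using insert subgroup.m_closed[OF H]
    by (simp add: comm_monoid.finprod_insert comm_group.axioms(1)[OF sl_comm_group])
qed

lemma finprod_sl_entry:
  assumes S: "finite S" and g: "\<And>s. s \<in> S \<Longrightarrow> g s \<in> carrier (sl :: ('n::finite \<Rightarrow> 'n \<Rightarrow> 'a set) monoid)"
  shows "finprod sl g S i j = finsum Q (\<lambda>s. g s i j) S"
  using S g
proof (induct S rule: finite_induct)
  case empty show ?case
    by (simp add: comm_monoid.finprod_empty comm_group.axioms(1)[OF sl_comm_group] sl_add_simps
        abelian_monoid.finsum_empty Q_am)
next
  case (insert x S)
  have "g \<in> S \<rightarrow> carrier sl" "g x \<in> carrier sl" using insert by auto
  hence "finprod sl g (insert x S) = g x \<otimes>\<^bsub>sl\<^esub> finprod sl g S"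
    using insert by (simp add: comm_monoid.finprod_insert comm_group.axioms(1)[OF sl_comm_group])
  moreover have "(\<lambda>s. g s i j) \<in> S \<rightarrow> carrier Q" "g x i j \<in> carrier Q"
    using insert by (auto simp: sl_add_simps)
  ultimately show ?case using insert
    by (simp add: sl_add_simps abelian_monoid.finsum_insert Q_am)
qed


lemma psi_of:
  assumes "det (mat 1 + sm (of_nat p ^ r) W) = 1"
  shows "mat 1 + sm (of_nat p ^ r) W \<in> Gam p r"
    "psi r (mat 1 + sm (of_nat p ^ r) W) = (\<lambda>i j. pr p (W $ i $ j))"
  using assms by (auto simp: Gam_iff psi_def Xr_unique)

lemma psi_surj:
  assumes r: "1 \<le> r"
  shows "psi r ` Gam p r = (carrier sl :: ('n::finite \<Rightarrow> 'n \<Rightarrow> 'a set) set)"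
proof
  show "psi r ` Gam p r \<subseteq> (carrier sl :: ('n::finite \<Rightarrow> 'n \<Rightarrow> 'a set) set)"
    using psi_carrier[OF r] by auto
next
  let ?H = "psi r ` Gam p r :: ('n \<Rightarrow> 'n \<Rightarrow> 'a set) set"
  let ?c = "of_nat p ^ r :: 'a"
  have Hsub: "subgroup ?H sl"
    using group_hom.img_is_subgroup[OF psi_hom[OF r]] by simp
  show "carrier sl \<subseteq> ?H"
  proof
    fix M assume M: "M \<in> (carrier sl :: ('n \<Rightarrow> 'n \<Rightarrow> 'a set) set)"
    hence "\<forall>i j. \<exists>y. M i j = pr p y" unfolding sl_add_simps Rmodp_carrier by blast
    then obtain Y where Y: "\<And>i j. M i j = pr p (Y i j)" by metis
    have "finsum Q (\<lambda>i. M i i) UNIV = \<zero>\<^bsub>Q\<^esub>" using M by (simp add: sl_add_simps)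
    hence tr: "(\<Sum>i\<in>UNIV. Y i i) \<in> mult_ideal p" by (simp add: Y pr_ops pr_zero_iff)
    define i0 :: 'n where "i0 = undefined"
    define e where "e s = (\<lambda>i j. pr p (if (i,j) = s then Y i j else 0))" for s :: "'n \<times> 'n"
    define d where "d k = (\<lambda>i j. pr p ((if i = j \<and> i = k then Y k k else 0) - (if i = j \<and> i = i0 then Y k k else 0)))" for k
    let ?S1 = "{s :: 'n \<times> 'n. fst s \<noteq> snd s}"
    let ?S2 = "UNIV - {i0}"
    have eH: "e s \<in> ?H" if s: "s \<in> ?S1" for s
    proof -
      obtain k l where kl: "s = (k,l)" "k \<noteq> l" using s by (cases s) auto
      have d: "det (mat 1 + sm ?c (Em k l (Y k l))) = 1" using det_Em[OF kl(2)] .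
      have "e s = psi r (mat 1 + sm ?c (Em k l (Y k l)))"
        unfolding psi_of(2)[OF d] by (auto simp: e_def kl Em_def fun_eq_iff)
      thus ?thesis using psi_of(1)[OF d] by blast
    qed
    have dH: "d k \<in> ?H" if k: "k \<in> ?S2" for k
    proof -
      have k0: "k \<noteq> i0" using k by simp
      let ?a = "Y k k"
      have d1: "det (mat 1 + sm ?c (Nm k i0 ?a)) = 1" using det_Nm[OF k0] .
      have d2: "det (mat 1 + sm ?c (Em k i0 (- ?a))) = 1" using det_Em[OF k0] .
      have d3: "det (mat 1 + sm ?c (Em i0 k ?a)) = 1" using det_Em k0 by metis
      have "psi r (mat 1 + sm ?c (Nm k i0 ?a)) \<otimes>\<^bsub>sl\<^esub> psi r (mat 1 + sm ?c (Em k i0 (- ?a)))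
              \<otimes>\<^bsub>sl\<^esub> psi r (mat 1 + sm ?c (Em i0 k ?a)) \<in> ?H"
        using psi_of(1)[OF d1] psi_of(1)[OF d2] psi_of(1)[OF d3] subgroup.m_closed[OF Hsub] by blast
      moreover have "psi r (mat 1 + sm ?c (Nm k i0 ?a)) \<otimes>\<^bsub>sl\<^esub> psi r (mat 1 + sm ?c (Em k i0 (- ?a)))
              \<otimes>\<^bsub>sl\<^esub> psi r (mat 1 + sm ?c (Em i0 k ?a)) = d k"
        unfolding psi_of(2)[OF d1] psi_of(2)[OF d2] psi_of(2)[OF d3]
        using k0 by (auto simp: sl_add_simps pr_ops d_def fun_eq_iff Nm_def Em_def)
      ultimately show ?thesis by simp
    qed
    have eC: "e s \<in> carrier sl" if "s \<in> ?S1" for s using eH[OF that] subgroup.subset[OF Hsub] by blast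
    have dC: "d k \<in> carrier sl" if "k \<in> ?S2" for k using dH[OF that] subgroup.subset[OF Hsub] by blast
    have fin1: "finite ?S1" by simp
    have fin2: "finite ?S2" by simp
    have "M = finprod sl e ?S1 \<otimes>\<^bsub>sl\<^esub> finprod sl d ?S2"
    proof (rule ext, rule ext)
      fix i j
      have f1: "finprod sl e ?S1 i j = finsum Q (\<lambda>s. e s i j) ?S1" by (rule finprod_sl_entry[OF fin1 eC])
      have f2: "finprod sl d ?S2 i j = finsum Q (\<lambda>s. d s i j) ?S2" by (rule finprod_sl_entry[OF fin2 dC])
      have "(finprod sl e ?S1 \<otimes>\<^bsub>sl\<^esub> finprod sl d ?S2) i j
            = finsum Q (\<lambda>s. e s i j) ?S1 \<oplus>\<^bsub>Q\<^esub> finsum Q (\<lambda>k. d k i j) ?S2"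
        by (simp add: sl_add_simps f1 f2)
      also have "\<dots> = pr p ((\<Sum>s\<in>?S1. if (i,j) = s then Y i j else 0)
          + (\<Sum>k\<in>?S2. (if i = j \<and> i = k then Y k k else 0) - (if i = j \<and> i = i0 then Y k k else 0)))"
        by (simp add: e_def d_def pr_ops)
      also have "\<dots> = pr p (Y i j)"
      proof (cases "i = j")
        case False
        thus ?thesis by (simp add: sum.delta')
      next
        case True
        show ?thesis
        proof (cases "i = i0")
          case False
          have "(\<Sum>k\<in>?S2. (if i = j \<and> i = k then Y k k else 0) - (if i = j \<and> i = i0 then Y k k else 0))
              = (\<Sum>k\<in>?S2. (if k = i then Y i i else 0))"
            using True False by (intro sum.cong) auto
          also have "\<dots> = Y i i" using False by (simp add: sum.delta')
          finally show ?thesis using True by (simp add: sum.delta')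
        next
          case i0: True
          have "(\<Sum>k\<in>?S2. (if i = j \<and> i = k then Y k k else 0) - (if i = j \<and> i = i0 then Y k k else 0))
              = - (\<Sum>k\<in>?S2. Y k k)"
            using True i0 by (simp add: sum_negf)
          moreover have sr: "(\<Sum>k\<in>UNIV. Y k k) = Y i0 i0 + (\<Sum>k\<in>?S2. Y k k)"
            by (rule sum.remove) auto
          ultimately have "(\<Sum>s\<in>?S1. if (i,j) = s then Y i j else 0)
              + (\<Sum>k\<in>?S2. (if i = j \<and> i = k then Y k k else 0) - (if i = j \<and> i = i0 then Y k k else 0))
              = - (\<Sum>k\<in>?S2. Y k k)" using True by (simp add: sum.delta')
          moreover have "- (\<Sum>k\<in>?S2. Y k k) - Y i j = - (\<Sum>k\<in>UNIV. Y k k)"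
            using True i0 sr by simp
          ultimately show ?thesis using mult_ideal_uminus[OF tr] by (simp add: pr_eq)
        qed
      qed
      finally show "M i j = (finprod sl e ?S1 \<otimes>\<^bsub>sl\<^esub> finprod sl d ?S2) i j" by (simp add: Y)
    qed
    moreover have "finprod sl e ?S1 \<in> ?H" by (rule finprod_in_subgroup[OF Hsub fin1 eH])
    moreover have "finprod sl d ?S2 \<in> ?H" by (rule finprod_in_subgroup[OF Hsub fin2 dH])
    ultimately show "M \<in> ?H" using subgroup.m_closed[OF Hsub] by simp
  qed
qed

end


lemma (in group) comm_identity:
  assumes x: "x \<in> carrier G" and y: "y \<in> carrier G"
  shows "(y \<otimes> x) \<otimes> (inv x \<otimes> inv y \<otimes> x \<otimes> y) = x \<otimes> y"
proof -
  have cx: "x \<otimes> (inv x \<otimes> z) = z" if "z \<in> carrier G" for z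
    using x that by (simp add: m_assoc[symmetric])
  have cy: "y \<otimes> (inv y \<otimes> z) = z" if "z \<in> carrier G" for z
    using y that by (simp add: m_assoc[symmetric])
  show ?thesis using x y by (simp add: m_assoc cx cy)
qed

lemma comm_formula:
  fixes Y Z :: "'a::comm_ring_1^'n::finite^'n"
  shows "(mat 1 + sm a Y) ** (mat 1 + sm b Z) - (mat 1 + sm b Z) ** (mat 1 + sm a Y) = sm (a * b) (Y ** Z - Z ** Y)"
  by (simp add: matrix_add_ldistrib matrix_add_rdistrib sm_mult_left sm_mult_right sm_sm sm_diff sm_add mult.commute)

context gm begin

lemma Gam_mono: "r \<le> r' \<Longrightarrow> Gam p r' \<subseteq> (Gam p r :: ('a^'n::finite^'n) set)"
proof
  fix A :: "'a^'n^'n" assume rr: "r \<le> r'" and A: "A \<in> Gam p r'"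
  then obtain Y where Y: "A = mat 1 + sm (of_nat p ^ r') Y" "det A = 1" by (auto simp: Gam_iff)
  have "of_nat p ^ r' = (of_nat p ^ r :: 'a) * of_nat p ^ (r' - r)"
    using rr by (simp add: power_add[symmetric])
  hence "A = mat 1 + sm (of_nat p ^ r) (sm (of_nat p ^ (r' - r)) Y)" using Y by (simp add: sm_sm)
  thus "A \<in> Gam p r" using Y(2) unfolding Gam_iff by blast
qed

lemma comm_Gam:
  assumes r: "1 \<le> r" and s: "1 \<le> s" and A: "A \<in> Gam p r" and B: "B \<in> Gam p s"
  shows "grp_comm A B \<in> (Gam p (r + s) :: ('a^'n::finite^'n) set)"
    "psi (r + s) (grp_comm A B) = sl_bracket Q (psi r A) (psi s B)"
proof -
  let ?a = "of_nat p ^ r :: 'a" and ?b = "of_nat p ^ s :: 'a"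
  let ?Y = "Xr r A" and ?Z = "Xr s B"
  let ?C = "grp_comm A B"
  interpret SG: group "SL :: ('a^'n^'n) monoid" by (rule SL_group)
  have Ac: "A \<in> carrier SL" and Bc: "B \<in> carrier SL" using A B by (auto simp: Gam_def)
  have Cc: "?C \<in> carrier SL" using Ac Bc unfolding grp_comm_def by (meson SG.m_closed SG.inv_closed)
  have BAC: "(B ** A) ** ?C = A ** B"
    using SG.comm_identity[OF Ac Bc] by (simp add: grp_comm_def)
  have dBA: "det (B ** A) = 1" using Ac Bc by (simp add: det_mul)
  let ?D = "adj (B ** A)"
  have eA: "A = mat 1 + sm ?a ?Y" using Xr[OF A] .
  have eB: "B = mat 1 + sm ?b ?Z" using Xr[OF B] .
  have comm: "A ** B - B ** A = sm (?a * ?b) (?Y ** ?Z - ?Z ** ?Y)"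
    using comm_formula[of ?a ?Y ?b ?Z] eA eB by simp
  have "?C = ?D ** (A ** B)"
    using BAC det_one_inverse(2)[OF dBA] by (metis matrix_mul_assoc matrix_mul_lid)
  hence "?C - mat 1 = ?D ** (A ** B - B ** A)"
    using det_one_inverse(2)[OF dBA] by (simp add: matrix_diff_ldistrib)
  hence C1: "?C = mat 1 + sm (of_nat p ^ (r + s)) (?D ** (?Y ** ?Z - ?Z ** ?Y))"
    unfolding comm by (simp add: sm_mult_right power_add algebra_simps)
  have dC: "det ?C = 1" using Cc by simp
  show CG: "?C \<in> Gam p (r + s)" unfolding Gam_iff using C1 dC by blast
  have XC: "Xr (r + s) ?C = ?D ** (?Y ** ?Z - ?Z ** ?Y)" using C1 by (rule Xr_unique)
  let ?K = "?D ** (?Y ** ?Z - ?Z ** ?Y)"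
  have BAK: "(B ** A) ** ?K = ?Y ** ?Z - ?Z ** ?Y"
    using det_one_inverse(1)[OF dBA] by (simp add: matrix_mul_assoc)
  have A1: "A \<in> Gam p 1" using Gam_mono[of 1 r] r A by auto
  have B1: "B \<in> Gam p 1" using Gam_mono[of 1 s] s B by auto
  have BAin: "B ** A \<in> Gam p 1"
    using subgroup.m_closed[OF Gam_subgroup B1 A1] by simp
  define X1 where "X1 = Xr 1 (B ** A)"
  have BA1: "B ** A = mat 1 + sm (of_nat p) X1" using Xr[OF BAin] unfolding X1_def by simp
  have "(B ** A) ** ?K = ?K + sm (of_nat p) (X1 ** ?K)"
    unfolding BA1 by (simp add: matrix_add_rdistrib sm_mult_left)
  hence "?K - (?Y ** ?Z - ?Z ** ?Y) = - (sm (of_nat p) (X1 ** ?K))"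
    unfolding BAK by (simp add: algebra_simps)
  hence "?K $ i $ j - (?Y ** ?Z - ?Z ** ?Y) $ i $ j = - (of_nat p * (X1 ** ?K) $ i $ j)" for i j
    by (metis sm_comp vector_minus_component vector_uminus_component)
  hence kd: "?K $ i $ j - (?Y ** ?Z - ?Z ** ?Y) $ i $ j \<in> mult_ideal p" for i j
    using mult_ideal_uminus[OF mult_ideal_I] by metis
  have br: "sl_bracket Q (psi r A) (psi s B) = (\<lambda>i j. pr p ((?Y ** ?Z - ?Z ** ?Y) $ i $ j))"
    by (simp add: sl_bracket_def psi_def fun_eq_iff pr_ops mmult_comp)
  have ps: "psi (r + s) ?C = (\<lambda>i j. pr p (?K $ i $ j))" by (simp only: psi_def XC)
  have eq: "pr p (?K $ i $ j) = pr p ((?Y ** ?Z - ?Z ** ?Y) $ i $ j)" for i j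
    using kd[of i j] by (simp only: pr_eq)
  show "psi (r + s) ?C = sl_bracket Q (psi r A) (psi s B)"
    unfolding ps br by (intro ext) (rule eq)
qed

end


lemma iso_sum_group_map:
  assumes f: "\<And>i. i \<in> I \<Longrightarrow> f i \<in> iso (G i) (H i)"
    and G: "\<And>i. i \<in> I \<Longrightarrow> group (G i)" and H: "\<And>i. i \<in> I \<Longrightarrow> group (H i)"
  shows "(\<lambda>x. (\<lambda>i\<in>I. f i (x i))) \<in> iso (sum_group I G) (sum_group I H)" (is "_ \<in> iso ?IG ?IH")
proof -
  have injf: "inj_on (f i) (carrier (G i))"
    and homf: "f i \<in> hom (G i) (H i)" if "i \<in> I" for i
    using \<open>i \<in> I\<close> f by (auto simp: iso_def bij_betw_def)
  then have one: "\<And>x. \<lbrakk>f i x = \<one>\<^bsub>H i\<^esub>; x \<in> carrier (G i)\<rbrakk> \<Longrightarrow> x = \<one>\<^bsub>G i\<^esub>" if "i \<in> I" for i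
    by (metis G H group.subgroup_self hom_one inj_on_eq_iff subgroup.one_closed that)
  have fin1: "finite {i \<in> I. x i \<noteq> \<one>\<^bsub>G i\<^esub>} \<Longrightarrow> finite {i \<in> I. f i (x i) \<noteq> \<one>\<^bsub>H i\<^esub>}" for x
    using homf by (auto simp: G H hom_one elim!: rev_finite_subset)
  define h where "h \<equiv> \<lambda>x. (\<lambda>i\<in>I. f i (x i))"
  have hom: "h \<in> iso ?IG ?IH"
  proof (rule isoI)
    show hom: "h \<in> hom ?IG ?IH"
    proof (rule homI)
      fix x
      assume "x \<in> carrier ?IG"
      with f fin1 show "h x \<in> carrier ?IH"
        by (force simp: h_def PiE_def iso_def hom_def carrier_sum_group assms conj_commute cong: conj_cong)
    next
      fix x y
      assume "x \<in> carrier ?IG" "y \<in> carrier ?IG"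
      with homf show "h (x \<otimes>\<^bsub>?IG\<^esub> y) = h x \<otimes>\<^bsub>?IH\<^esub> h y"
        by (fastforce simp add: h_def PiE_def hom_def carrier_sum_group assms intro: restrict_ext)
    qed
    with G H interpret GH : group_hom "?IG" "?IH" h
      by (simp add: group_hom_def group_hom_axioms_def)
    show "bij_betw h (carrier ?IG) (carrier ?IH)"
      unfolding bij_betw_def
    proof (intro conjI subset_antisym)
      have \<gamma>: "\<gamma> i = \<one>\<^bsub>G i\<^esub>"
        if "\<gamma> \<in> (\<Pi>\<^sub>E i\<in>I. carrier (G i))" and eq: "(\<lambda>i\<in>I. f i (\<gamma> i)) = (\<lambda>i\<in>I. \<one>\<^bsub>H i\<^esub>)" and "i \<in> I"
        for \<gamma> i
        using \<open>i \<in> I\<close> one that by (simp add: fun_eq_iff) (meson PiE_iff)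
      show "inj_on h (carrier ?IG)"
        apply (simp add: iso_def bij_betw_def GH.inj_on_one_iff assms one flip: carrier_sum_group)
        apply (auto simp: h_def fun_eq_iff carrier_sum_group assms PiE_def Pi_def extensional_def one)
        done
    next
      show "h ` carrier ?IG \<subseteq> carrier ?IH"
        using homf GH.hom_closed
        by (fastforce simp: h_def PiE_def Pi_def dest!: bij_betwE)
    next
      show "carrier ?IH \<subseteq> h ` carrier ?IG"
        unfolding h_def
      proof (clarsimp simp: iso_def bij_betw_def carrier_sum_group assms)
        fix x
        assume x: "x \<in> (\<Pi>\<^sub>E i\<in>I. carrier (H i))" and fin: "finite {i \<in> I. x i \<noteq> \<one>\<^bsub>H i\<^esub>}"
        with f have xf: "x \<in> (\<Pi>\<^sub>E i\<in>I. f i ` carrier (G i))"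
          unfolding h_def
          by (auto simp: iso_def bij_betw_def)
        have "\<And>i. i \<in> I \<Longrightarrow> inj_on (f i) (carrier (G i))"
          using f by (auto simp: iso_def bij_betw_def)
        let ?g = "\<lambda>i\<in>I. inv_into (carrier (G i)) (f i) (x i)"
        show "x \<in> (\<lambda>g. \<lambda>i\<in>I. f i (g i))
                 ` {x \<in> \<Pi>\<^sub>E i\<in>I. carrier (G i). finite {i \<in> I. x i \<noteq> \<one>\<^bsub>G i\<^esub>}}"
        proof
          show xeq: "x = (\<lambda>i\<in>I. f i (?g i))"
            using x by (clarsimp simp: PiE_iff fun_eq_iff extensional_def) (metis iso_iff f_inv_into_f f)
          have "finite {i \<in> I. inv_into (carrier (G i)) (f i) (x i) \<noteq> \<one>\<^bsub>G i\<^esub>}"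
            apply (rule finite_subset [OF _ fin])
            using G H group.subgroup_self hom_one homf injf inv_into_f_eq subgroup.one_closed by fastforce
          with x show "?g \<in> {x \<in> \<Pi>\<^sub>E i\<in>I. carrier (G i). finite {i \<in> I. x i \<noteq> \<one>\<^bsub>G i\<^esub>}}"
            apply (auto simp: PiE_iff inv_into_into conj_commute cong: conj_cong)
            by (metis (no_types, opaque_lifting) iso_iff f inv_into_into)
        qed
      qed
    qed
  qed
  then show ?thesis by (simp add: h_def)
qed

context gm begin

definition theta :: "nat \<Rightarrow> ('a^'n::finite^'n) set \<Rightarrow> 'n \<Rightarrow> 'n \<Rightarrow> 'a set" where
  "theta r = (\<lambda>C. the_elem (psi r ` C))"

lemma gr_piece_eq: "1 \<le> r \<Longrightarrow> gr_piece p r = (G r :: ('a^'n::finite^'n) monoid) Mod kernel (G r) sl (psi r)"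
  by (simp add: gr_piece_def psi_kernel)

lemma theta_iso: "1 \<le> r \<Longrightarrow> theta r \<in> iso (gr_piece p r :: ('a^'n::finite^'n) set monoid) sl"
  using group_hom.FactGroup_iso_set[OF psi_hom, of r] psi_surj[of r]
  by (simp add: gr_piece_eq theta_def)

lemma gr_group: "1 \<le> r \<Longrightarrow> group (gr_piece p r :: ('a^'n::finite^'n) set monoid)"
  using normal.factorgroup_is_group[OF group_hom.normal_kernel[OF psi_hom, of r]]
  by (simp add: gr_piece_eq)

definition phi :: "nat \<Rightarrow> ('n::finite \<Rightarrow> 'n \<Rightarrow> 'a set) \<Rightarrow> ('a^'n^'n) set" where
  "phi r = inv_into (carrier (gr_piece p r)) (theta r)"

lemma phi_iso: "1 \<le> r \<Longrightarrow> phi r \<in> iso sl (gr_piece p r :: ('a^'n::finite^'n) set monoid)"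
  unfolding phi_def by (rule group.iso_set_sym[OF gr_group theta_iso])

lemma sl_l_one: "x \<in> carrier (sl :: ('n::finite \<Rightarrow> 'n \<Rightarrow> 'a set) monoid) \<Longrightarrow> \<one>\<^bsub>sl\<^esub> \<otimes>\<^bsub>sl\<^esub> x = x"
  using monoid.l_one[OF group.is_monoid[OF comm_group.axioms(2)[OF sl_comm_group]]] by blast

lemma r_coset_G: "r_coset (G r) H g = r_coset SL H g"
  by (simp add: r_coset_def)

lemma theta_coset:
  assumes r: "1 \<le> r" and g: "g \<in> (Gam p r :: ('a^'n::finite^'n) set)"
  shows "theta r (Gam p (r + 1) #>\<^bsub>SL\<^esub> g) = psi r g"
proof -
  have "psi r ` (Gam p (r + 1) #>\<^bsub>SL\<^esub> g) = {psi r g}"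
  proof
    show "psi r ` (Gam p (r + 1) #>\<^bsub>SL\<^esub> g) \<subseteq> {psi r g}"
    proof
      fix y assume "y \<in> psi r ` (Gam p (r + 1) #>\<^bsub>SL\<^esub> g)"
      then obtain k where k: "k \<in> Gam p (r + 1)" "y = psi r (k ** g)" by (auto simp: r_coset_def)
      have kr: "k \<in> Gam p r" using Gam_mono[of r "r+1"] k by auto
      have "psi r k = \<one>\<^bsub>sl\<^esub>" using k psi_kernel[OF r] by (auto simp: kernel_def)
      hence "y = \<one>\<^bsub>sl\<^esub> \<otimes>\<^bsub>sl\<^esub> psi r g" using k psi_mult[OF r kr g] by simp
      thus "y \<in> {psi r g}" using psi_carrier[OF r g] by (simp add: sl_l_one)
    qed
  next
    have "mat 1 \<in> (Gam p (r + 1) :: ('a^'n^'n) set)" using Gam_iff[of "mat 1" "r+1"] by (metis det_I add_0_right sm_0)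
    thus "{psi r g} \<subseteq> psi r ` (Gam p (r + 1) #>\<^bsub>SL\<^esub> g)"
      by (force simp: r_coset_def)
  qed
  thus ?thesis by (simp add: theta_def)
qed

lemma gr_carrier:
  assumes r: "1 \<le> r" and C: "C \<in> carrier (gr_piece p r :: ('a^'n::finite^'n) set monoid)"
  shows "(SOME g. g \<in> C) \<in> Gam p r" "theta r C = psi r (SOME g. g \<in> C)"
proof -
  obtain g0 where g0: "g0 \<in> Gam p r" "C = Gam p (r + 1) #>\<^bsub>SL\<^esub> g0"
    using C by (auto simp: gr_piece_def FactGroup_def RCOSETS_def r_coset_G)
  have "mat 1 \<in> (Gam p (r + 1) :: ('a^'n^'n) set)" using Gam_iff[of "mat 1" "r+1"] by (metis det_I add_0_right sm_0)
  hence "g0 \<in> C" using g0 by (force simp: r_coset_def)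
  hence "(SOME g. g \<in> C) \<in> C" by (rule someI)
  then obtain k where k: "k \<in> Gam p (r + 1)" "(SOME g. g \<in> C) = k ** g0" using g0 by (auto simp: r_coset_def)
  have kr: "k \<in> Gam p r" using Gam_mono[of r "r+1"] k by auto
  show "(SOME g. g \<in> C) \<in> Gam p r" using k kr g0 subgroup.m_closed[OF Gam_subgroup kr g0(1)] by simp
  have "psi r k = \<one>\<^bsub>sl\<^esub>" using k psi_kernel[OF r] by (auto simp: kernel_def)
  hence "psi r (SOME g. g \<in> C) = psi r g0"
    using k psi_mult[OF r kr g0(1)] psi_carrier[OF r g0(1)] by (simp add: sl_l_one)
  thus "theta r C = psi r (SOME g. g \<in> C)" using theta_coset[OF r g0(1)] g0 by simp
qed

lemma phi_bracket:
  assumes r: "1 \<le> r" and s: "1 \<le> s" and a: "a \<in> carrier (sl :: ('n::finite \<Rightarrow> 'n \<Rightarrow> 'a set) monoid)"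
    and b: "b \<in> carrier (sl :: ('n::finite \<Rightarrow> 'n \<Rightarrow> 'a set) monoid)"
  shows "phi (r + s) (sl_bracket Q a b) = coset_comm p r s (phi r a) (phi s b)"
proof -
  have rs: "1 \<le> r + s" using r by simp
  have Ca: "phi r a \<in> carrier (gr_piece p r :: ('a^'n^'n) set monoid)"
    using phi_iso[OF r] a by (auto simp: iso_def hom_def)
  have Cb: "phi s b \<in> carrier (gr_piece p s :: ('a^'n^'n) set monoid)"
    using phi_iso[OF s] b by (auto simp: iso_def hom_def)
  have ta: "theta r (phi r a) = a"
    using theta_iso[OF r] a unfolding phi_def iso_def bij_betw_def by (auto intro: f_inv_into_f)
  have tb: "theta s (phi s b) = b"
    using theta_iso[OF s] b unfolding phi_def iso_def bij_betw_def by (auto intro: f_inv_into_f)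
  define g where "g = (SOME g. g \<in> phi r a)"
  define h where "h = (SOME g. g \<in> phi s b)"
  have g: "g \<in> Gam p r" "psi r g = a" using gr_carrier[OF r Ca] ta by (auto simp: g_def)
  have h: "h \<in> Gam p s" "psi s h = b" using gr_carrier[OF s Cb] tb by (auto simp: h_def)
  have cG: "grp_comm g h \<in> Gam p (r + s)" using comm_Gam(1)[OF r s g(1) h(1)] .
  have E: "coset_comm p r s (phi r a) (phi s b) = Gam p (r + s + 1) #>\<^bsub>SL\<^esub> grp_comm g h"
    by (simp only: coset_comm_def g_def h_def)
  have Ec: "Gam p (r + s + 1) #>\<^bsub>SL\<^esub> grp_comm g h \<in> carrier (gr_piece p (r + s) :: ('a^'n^'n) set monoid)"
    using cG by (auto simp: gr_piece_def FactGroup_def RCOSETS_def r_coset_G)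
  have "theta (r + s) (Gam p (r + s + 1) #>\<^bsub>SL\<^esub> grp_comm g h) = psi (r + s) (grp_comm g h)"
    by (rule theta_coset[OF rs cG])
  also have "\<dots> = sl_bracket Q (psi r g) (psi s h)" by (rule comm_Gam(2)[OF r s g(1) h(1)])
  also have "\<dots> = sl_bracket Q a b" by (simp only: g(2) h(2))
  finally have th: "theta (r + s) (Gam p (r + s + 1) #>\<^bsub>SL\<^esub> grp_comm g h) = sl_bracket Q a b" .
  have inj: "inj_on (theta (r + s)) (carrier (gr_piece p (r + s) :: ('a^'n^'n) set monoid))"
    using theta_iso[OF rs] unfolding iso_def bij_betw_def by blast
  have "phi (r + s) (theta (r + s) (Gam p (r + s + 1) #>\<^bsub>SL\<^esub> grp_comm g h)) = Gam p (r + s + 1) #>\<^bsub>SL\<^esub> grp_comm g h"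
    unfolding phi_def by (rule inv_into_f_f[OF inj Ec])
  hence "phi (r + s) (sl_bracket Q a b) = Gam p (r + s + 1) #>\<^bsub>SL\<^esub> grp_comm g h" by (simp only: th)
  thus ?thesis using E by simp
qed

end


lemma hom_finprod_gen:
  assumes hom: "h \<in> hom G H" and G: "comm_group G" and H: "comm_group H"
    and S: "finite S" and F: "F \<in> S \<rightarrow> carrier G"
  shows "h (finprod G F S) = finprod H (h \<circ> F) S"
  using S F
proof (induct S rule: finite_induct)
  case empty
  have "h \<one>\<^bsub>G\<^esub> = \<one>\<^bsub>H\<^esub>"
    using group_hom.hom_one[OF group_hom.intro[OF comm_group.axioms(2)[OF G] comm_group.axioms(2)[OF H]]] hom
    by (simp add: group_hom_axioms_def)
  thus ?case
    by (simp add: comm_monoid.finprod_empty[OF comm_group.axioms(1)[OF G]] comm_monoid.finprod_empty[OF comm_group.axioms(1)[OF H]])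
next
  case (insert a S)
  have F1: "F \<in> S \<rightarrow> carrier G" "F a \<in> carrier G" using insert by auto
  have "h (finprod G F (insert a S)) = h (F a \<otimes>\<^bsub>G\<^esub> finprod G F S)"
    using insert F1 by (simp add: comm_monoid.finprod_insert[OF comm_group.axioms(1)[OF G]])
  also have "\<dots> = h (F a) \<otimes>\<^bsub>H\<^esub> h (finprod G F S)"
    by (rule hom_mult[OF hom F1(2) comm_monoid.finprod_closed[OF comm_group.axioms(1)[OF G] F1(1)]])
  also have "\<dots> = finprod H (h \<circ> F) (insert a S)"
    using insert F1 hom by (simp add: comm_monoid.finprod_insert[OF comm_group.axioms(1)[OF H]] hom_def Pi_def comp_def)
  finally show ?case .
qed

lemma comm_group_from_iso:
  assumes G: "group G" and H: "comm_group H" and f: "f \<in> iso G H"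
  shows "comm_group G"
proof (rule group.group_comm_groupI[OF G])
  fix x y assume x: "x \<in> carrier G" and y: "y \<in> carrier G"
  have hom: "f \<in> hom G H" and inj: "inj_on f (carrier G)" using f by (auto simp: iso_def bij_betw_def)
  have "f (x \<otimes>\<^bsub>G\<^esub> y) = f (y \<otimes>\<^bsub>G\<^esub> x)"
    using hom_mult[OF hom x y] hom_mult[OF hom y x] hom x y comm_monoid.m_comm[OF comm_group.axioms(1)[OF H]]
    by (simp add: hom_def Pi_def)
  thus "x \<otimes>\<^bsub>G\<^esub> y = y \<otimes>\<^bsub>G\<^esub> x"
    using inj x y group.is_monoid[OF G] monoid.m_closed by (metis inj_on_eq_iff)
qed

context gm begin

lemma gr_comm: assumes r: "1 \<le> r" shows "comm_group (gr_piece p r :: ('a^'n::finite^'n) set monoid)"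
  by (rule comm_group_from_iso[OF gr_group[OF r] sl_comm_group theta_iso[OF r]])

lemma sl_bracket_carrier:
  assumes a: "a \<in> carrier (sl :: ('n::finite \<Rightarrow> 'n \<Rightarrow> 'a set) monoid)" and b: "b \<in> carrier (sl :: ('n::finite \<Rightarrow> 'n \<Rightarrow> 'a set) monoid)"
  shows "sl_bracket Q a b \<in> carrier sl"
proof -
  obtain g where g: "g \<in> Gam p 1" "psi 1 g = a" using psi_surj[of 1] a by (metis image_iff order_refl)
  obtain h where h: "h \<in> Gam p 1" "psi 1 h = b" using psi_surj[of 1] b by (metis image_iff order_refl)
  have "sl_bracket Q a b = psi (1 + 1) (grp_comm g h)" using comm_Gam(2)[of 1 1 g h] g h by simp
  moreover have "psi (1 + 1) (grp_comm g h) \<in> carrier sl"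
    using comm_Gam(1)[of 1 1 g h] g h by (intro psi_carrier) auto
  ultimately show ?thesis by simp
qed

lemma main:
  "\<exists>f. lie_iso (loop_add p :: (nat \<Rightarrow> 'n::finite \<Rightarrow> 'n \<Rightarrow> 'a set) monoid) (loop_bracket p)
                      (gr_add p :: (nat \<Rightarrow> ('a ^ 'n ^ 'n) set) monoid) (gr_bracket p) f"
proof -
  define f where "f = (\<lambda>x. \<lambda>k\<in>pos_degrees. phi k (x k :: 'n \<Rightarrow> 'n \<Rightarrow> 'a set) :: ('a^'n^'n) set)"
  have iso: "f \<in> iso (loop_add p :: (nat \<Rightarrow> 'n::finite \<Rightarrow> 'n \<Rightarrow> 'a set) monoid) (gr_add p)"
    unfolding f_def loop_add_def gr_add_def
    by (rule iso_sum_group_map) (auto simp: pos_degrees_def intro: phi_iso gr_group comm_group.axioms(2)[OF sl_comm_group])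
  have cL: "carrier (loop_add p :: (nat \<Rightarrow> 'n::finite \<Rightarrow> 'n \<Rightarrow> 'a set) monoid)
       = {x \<in> \<Pi>\<^sub>E i\<in>pos_degrees. carrier sl. finite {i \<in> pos_degrees. x i \<noteq> \<one>\<^bsub>sl\<^esub>}}"
    unfolding loop_add_def by (rule carrier_sum_group) (rule comm_group.axioms(2)[OF sl_comm_group])
  have br: "f (loop_bracket p x y) = gr_bracket p (f x) (f y)"
    if x: "x \<in> carrier (loop_add p :: (nat \<Rightarrow> 'n::finite \<Rightarrow> 'n \<Rightarrow> 'a set) monoid)"
      and y: "y \<in> carrier (loop_add p :: (nat \<Rightarrow> 'n::finite \<Rightarrow> 'n \<Rightarrow> 'a set) monoid)" for x y
  proof -
    have xc: "x i \<in> carrier sl" if "1 \<le> i" for i using x that cL by (auto simp: pos_degrees_def)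
    have yc: "y i \<in> carrier sl" if "1 \<le> i" for i using y that cL by (auto simp: pos_degrees_def)
    show ?thesis
    proof (rule ext)
      fix k
      show "f (loop_bracket p x y) k = gr_bracket p (f x) (f y) k"
      proof (cases "k \<in> pos_degrees")
        case False
        thus ?thesis by (simp add: f_def gr_bracket_def)
      next
        case True
        hence k: "1 \<le> k" by (simp add: pos_degrees_def)
        let ?S = "{(i, j). 1 \<le> i \<and> 1 \<le> j \<and> i + j = k}"
        have finS: "finite ?S" by (rule finite_subset[of _ "{..k} \<times> {..k}"]) auto
        let ?F = "\<lambda>(i, j). sl_bracket Q (x i) (y j)"
        have F: "?F \<in> ?S \<rightarrow> carrier sl" using xc yc sl_bracket_carrier by auto
        have homk: "phi k \<in> hom (sl :: ('n \<Rightarrow> 'n \<Rightarrow> 'a set) monoid) (gr_piece p k :: ('a^'n^'n) set monoid)"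
          using phi_iso[OF k] unfolding iso_def by blast
        have "f (loop_bracket p x y) k = phi k (finprod sl ?F ?S)"
          using True by (simp add: f_def loop_bracket_def)
        also have "\<dots> = finprod (gr_piece p k) (phi k \<circ> ?F) ?S"
          by (rule hom_finprod_gen[OF homk sl_comm_group gr_comm[OF k] finS F])
        also have "\<dots> = finprod (gr_piece p k) (\<lambda>(r, s). coset_comm p r s (f x r) (f y s)) ?S"
        proof (rule comm_monoid.finprod_cong'[OF comm_group.axioms(1)[OF gr_comm[OF k]]])
          show "?S = ?S" ..
          show "(\<lambda>(r, s). coset_comm p r s (f x r) (f y s)) \<in> ?S \<rightarrow> carrier (gr_piece p k)"
          proof
            fix z assume z: "z \<in> ?S"
            then obtain i j where ij: "z = (i, j)" "1 \<le> i" "1 \<le> j" "i + j = k" by auto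
            have "coset_comm p i j (f x i) (f y j) = phi k (sl_bracket Q (x i) (y j))"
              using phi_bracket[OF ij(2) ij(3) xc[OF ij(2)] yc[OF ij(3)]] ij by (simp add: f_def pos_degrees_def)
            moreover have "phi k (sl_bracket Q (x i) (y j)) \<in> carrier (gr_piece p k)"
              using phi_iso[OF k] sl_bracket_carrier[OF xc[OF ij(2)] yc[OF ij(3)]] by (auto simp: iso_def hom_def)
            ultimately show "(\<lambda>(r, s). coset_comm p r s (f x r) (f y s)) z \<in> carrier (gr_piece p k)"
              using ij by simp
          qed
          fix z assume z: "z \<in> ?S"
          then obtain i j where ij: "z = (i, j)" "1 \<le> i" "1 \<le> j" "i + j = k" by auto
          show "(phi k \<circ> ?F) z = (\<lambda>(r, s). coset_comm p r s (f x r) (f y s)) z"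
            using phi_bracket[OF ij(2) ij(3) xc[OF ij(2)] yc[OF ij(3)]] ij by (simp add: f_def pos_degrees_def)
        qed
        also have "\<dots> = gr_bracket p (f x) (f y) k"
          using True by (simp add: gr_bracket_def)
        finally show ?thesis .
      qed
    qed
  qed
  show ?thesis unfolding lie_iso_def using iso br by blast
qed

end

theorem theorem2p4:
  fixes V :: "'a::comm_ring_1 set" and p :: nat
  assumes "free_Z_basis V"
    and "CARD('n::finite) \<ge> 2"
    and "Factorial_Ring.prime p"
  shows "\<exists>f. lie_iso (loop_add p :: (nat \<Rightarrow> 'n \<Rightarrow> 'n \<Rightarrow> 'a set) monoid) (loop_bracket p)
                      (gr_add p :: (nat \<Rightarrow> ('a ^ 'n ^ 'n) set) monoid) (gr_bracket p) f"
proof -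
  interpret gm p V using assms(1,3) by unfold_locales
  show ?thesis by (rule main)
qed


end
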